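(* Let $N$ be a simply connected nilpotent Lie group and $|\cdot|$ a quasi-norm on $N$. Then for every $\varepsilon>0$ there exist $\delta>0$ and $C>0$ such that for all $x,y\in N$ with $|y|>C$ and $|x|\le\delta|y|$ we have $\big||xy|-|y|\big|\le\varepsilon|y|$.
   Context: $N$ is identified with its Lie algebra $\mathfrak n$ via the exponential map; $xy$ is the group product. Let $C^p(\mathfrak n)$ be the descending central series. A quasi-norm on $N$ is a continuous $|\cdot|:\mathfrak n\to[0,\infty)$ with $|x|=0$ iff $x=0$ and $|\delta_tx|=t|x|$ for all $t>0$, where $(\delta_t)_{t>0}$ is a one-parameter group of dilations: for some choice of subspaces $m_p$ with $C^p(\mathfrak n)=m_p\oplus C^{p+1}(\mathfrak n)$, $\delta_t$ is linear and acts by $t^p$ on $m_p$. *)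

theory Defs
  imports "HOL-Analysis.Analysis"
begin

definition lie_algebra :: "('a::euclidean_space \<Rightarrow> 'a \<Rightarrow> 'a) \<Rightarrow> bool" where
  "lie_algebra br \<longleftrightarrow> bilinear br \<and> (\<forall>x. br x x = 0) \<and>
     (\<forall>x y z. br x (br y z) + br y (br z x) + br z (br x y) = 0)"

fun lcs :: "('a::euclidean_space \<Rightarrow> 'a \<Rightarrow> 'a) \<Rightarrow> nat \<Rightarrow> 'a set" where
  "lcs br 0 = UNIV"
| "lcs br (Suc 0) = UNIV"
| "lcs br (Suc (Suc p)) = span {br x y | x y. y \<in> lcs br (Suc p)}"

definition nilpotent_lie :: "('a::euclidean_space \<Rightarrow> 'a \<Rightarrow> 'a) \<Rightarrow> bool" where
  "nilpotent_lie br \<longleftrightarrow> (\<exists>k. lcs br k = {0})"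

fun rbr :: "('a \<Rightarrow> 'a \<Rightarrow> 'a) \<Rightarrow> 'a list \<Rightarrow> 'a::real_vector" where
  "rbr br [] = 0"
| "rbr br [z] = z"
| "rbr br (z # zs) = br z (rbr br zs)"

text \<open>Group product on N identified with its Lie algebra via exp: the
  Baker-Campbell-Hausdorff series in Dynkin's form, truncated at degree DIM('a)
  (all higher terms vanish for a nilpotent Lie algebra, whose step is at most DIM('a)).\<close>
definition dynkin_words :: "nat \<Rightarrow> nat \<Rightarrow> (nat \<times> nat) list set" where
  "dynkin_words K n = {rs. length rs = n \<and> set rs \<subseteq> {0..K} \<times> {0..K} \<and>
      (\<forall>(r, s) \<in> set rs. 0 < r + s) \<and> sum_list (map (\<lambda>(r, s). r + s) rs) \<le> K}"

definition gmul :: "('a::euclidean_space \<Rightarrow> 'a \<Rightarrow> 'a) \<Rightarrow> 'a \<Rightarrow> 'a \<Rightarrow> 'a" where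
  "gmul br x y =
    (\<Sum>n\<in>{1..DIM('a)}. \<Sum>rs\<in>dynkin_words DIM('a) n.
       ((-1) ^ (n - 1) / real n
         / (real (sum_list (map (\<lambda>(r, s). r + s) rs))
            * (\<Prod>(r, s)\<leftarrow>rs. fact r * fact s)))
       *\<^sub>R rbr br (concat (map (\<lambda>(r, s). replicate r x @ replicate s y) rs)))"

definition dilation_family :: "('a::euclidean_space \<Rightarrow> 'a \<Rightarrow> 'a) \<Rightarrow> (real \<Rightarrow> 'a \<Rightarrow> 'a) \<Rightarrow> bool" where
  "dilation_family br \<delta> \<longleftrightarrow>
     (\<exists>m :: nat \<Rightarrow> 'a set.
        (\<forall>p\<ge>1. subspace (m p) \<and> m p \<inter> lcs br (Suc p) = {0} \<and>
                {u + v | u v. u \<in> m p \<and> v \<in> lcs br (Suc p)} = lcs br p) \<and>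
        (\<forall>t>0. linear (\<delta> t) \<and> (\<forall>p\<ge>1. \<forall>v\<in>m p. \<delta> t v = t ^ p *\<^sub>R v)))"

definition quasi_norm :: "('a::euclidean_space \<Rightarrow> 'a \<Rightarrow> 'a) \<Rightarrow> ('a \<Rightarrow> real) \<Rightarrow> bool" where
  "quasi_norm br q \<longleftrightarrow> continuous_on UNIV q \<and> (\<forall>x. 0 \<le> q x) \<and> (\<forall>x. q x = 0 \<longleftrightarrow> x = 0) \<and>
     (\<exists>\<delta>. dilation_family br \<delta> \<and> (\<forall>t>0. \<forall>x. q (\<delta> t x) = t * q x))"

end

theory Submission
  imports Defs
begin


lemma lcs_subspace: "subspace (lcs br p)"
  by (induction br p rule: lcs.induct) (auto simp: subspace_span)

lemma lcs_Suc_sub: "lcs br (Suc p) \<subseteq> lcs br p"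
proof (induction p rule: nat_less_induct)
  case (1 n)
  show ?case
  proof (cases n)
    case 0 then show ?thesis by simp
  next
    case (Suc n') note n = this
    show ?thesis
    proof (cases n')
      case 0 then show ?thesis using n by simp
    next
      case (Suc n'')
      have "lcs br (Suc (Suc n'')) \<subseteq> lcs br (Suc n'')" using 1 n Suc by (metis lessI)
      then have "{br x y | x y. y \<in> lcs br (Suc (Suc n''))} \<subseteq> {br x y | x y. y \<in> lcs br (Suc n'')}"
        by blast
      then show ?thesis using n Suc by (simp add: span_mono)
    qed
  qed
qed

lemma lcs_antimono: "p \<le> q \<Longrightarrow> lcs br q \<subseteq> lcs br p"
  by (induction q rule: dec_induct) (use lcs_Suc_sub in blast)+

lemma lcs_br: "y \<in> lcs br (Suc p) \<Longrightarrow> br x y \<in> lcs br (Suc (Suc p))"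
  by (auto intro!: span_base)

locale LS =
  fixes br :: "'a::euclidean_space \<Rightarrow> 'a \<Rightarrow> 'a" and m :: "nat \<Rightarrow> 'a set" and K :: nat
  assumes bil: "bilinear br" and alt: "\<And>x. br x x = 0"
    and jac: "\<And>x y z. br x (br y z) + br y (br z x) + br z (br x y) = 0"
    and nil: "lcs br (Suc K) = {0}"
    and msub: "\<And>p. p \<ge> 1 \<Longrightarrow> subspace (m p)"
    and mint: "\<And>p. p \<ge> 1 \<Longrightarrow> m p \<inter> lcs br (Suc p) = {0}"
    and msum: "\<And>p. p \<ge> 1 \<Longrightarrow> {u + v | u v. u \<in> m p \<and> v \<in> lcs br (Suc p)} = lcs br p"
begin

lemma anti: "br x y = - br y x"
proof -
  have "0 = br (x+y) (x+y)" by (simp add: alt)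
  also have "\<dots> = br x x + br x y + br y x + br y y"
    using bil by (simp add: bilinear_ladd bilinear_radd)
  finally show ?thesis by (simp add: alt eq_neg_iff_add_eq_0)
qed

lemma filt: "x \<in> lcs br (Suc i) \<Longrightarrow> y \<in> lcs br (Suc j) \<Longrightarrow> br x y \<in> lcs br (Suc i + Suc j)"
proof (induction i arbitrary: x y j)
  case 0
  then show ?case using lcs_br by simp
next
  case (Suc i)
  have sp: "subspace (lcs br (Suc (Suc i) + Suc j))" by (rule lcs_subspace)
  have xs: "x \<in> span {br a b | a b. b \<in> lcs br (Suc i)}" using Suc.prems by simp
  have sub: "subspace {x. br x y \<in> lcs br (Suc (Suc i) + Suc j)}"
      using sp bil by (auto simp: bilinear_lzero bilinear_ladd bilinear_lmul subspace_def)
  have base: "br z y \<in> lcs br (Suc (Suc i) + Suc j)" if zin: "z \<in> {br a b | a b. b \<in> lcs br (Suc i)}" for z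
  proof -
    obtain a b where z: "z = br a b" and b: "b \<in> lcs br (Suc i)" using zin by auto
    have "br y (br a b) + br a (br b y) + br b (br y a) = 0" by (rule jac)
    then have e: "br (br a b) y = br a (br b y) + br b (br y a)"
      by (metis anti add.assoc add_eq_0_iff)
    have 1: "br b y \<in> lcs br (Suc i + Suc j)" using Suc.IH b Suc.prems(2) by blast
    have "br a (br b y) \<in> lcs br (Suc (Suc i) + Suc j)" using lcs_br[of "br b y" br "i + Suc j" a] 1 by (simp del: lcs.simps)
    moreover have "br a y \<in> lcs br (Suc (Suc j))" using lcs_br Suc.prems(2) by blast
    then have "br y a \<in> lcs br (Suc (Suc j))" using anti lcs_subspace subspace_neg by metis
    then have "br b (br y a) \<in> lcs br (Suc (Suc i) + Suc j)" using Suc.IH[of b "br y a" "Suc j"] b by (simp del: lcs.simps)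
    ultimately show ?thesis using z e sp subspace_add by metis
  qed
  show ?case using span_induct[OF xs sub] base by blast
qed

lemma filt': "i \<ge> 1 \<Longrightarrow> j \<ge> 1 \<Longrightarrow> x \<in> lcs br i \<Longrightarrow> y \<in> lcs br j \<Longrightarrow> br x y \<in> lcs br (i + j)"
  using filt[of x "i - 1" y "j - 1"] by simp

lemma m_lcs: "p \<ge> 1 \<Longrightarrow> m p \<subseteq> lcs br p"
proof
  fix u assume "p \<ge> 1" "u \<in> m p"
  then have "u + 0 \<in> {u + v | u v. u \<in> m p \<and> v \<in> lcs br (Suc p)}"
    using lcs_subspace subspace_0 by blast
  then show "u \<in> lcs br p" using msum \<open>p \<ge> 1\<close> by simp
qed

lemma lcs_sub_add: "x \<in> lcs br p \<Longrightarrow> y \<in> lcs br p \<Longrightarrow> x + y \<in> lcs br p"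
  using lcs_subspace subspace_add by blast
lemma lcs_sub_diff: "x \<in> lcs br p \<Longrightarrow> y \<in> lcs br p \<Longrightarrow> x - y \<in> lcs br p"
  using lcs_subspace subspace_diff by blast
lemma lcs_sub_scale: "x \<in> lcs br p \<Longrightarrow> c *\<^sub>R x \<in> lcs br p"
  using lcs_subspace subspace_scale by blast
lemma lcs_0: "0 \<in> lcs br p"
  using lcs_subspace subspace_0 by blast

definition pj :: "nat \<Rightarrow> 'a \<Rightarrow> 'a" where
  "pj n w = (THE u. u \<in> m n \<and> w - u \<in> lcs br (Suc n))"

primrec res :: "nat \<Rightarrow> 'a \<Rightarrow> 'a" where
  "res 0 v = v"
| "res (Suc n) v = res n v - pj (Suc n) (res n v)"

definition pr :: "nat \<Rightarrow> 'a \<Rightarrow> 'a" where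
  "pr k v = (if k = 0 then 0 else pj k (res (k - 1) v))"

lemma pj_uniq: assumes "n \<ge> 1" "u \<in> m n" "w - u \<in> lcs br (Suc n)" "u' \<in> m n" "w - u' \<in> lcs br (Suc n)"
  shows "u = u'"
proof -
  have "u - u' \<in> m n" using subspace_diff[OF msub[OF assms(1)] assms(2) assms(4)] .
  moreover have "u - u' = (w - u') - (w - u)" by simp
  then have "u - u' \<in> lcs br (Suc n)" using lcs_sub_diff[OF assms(5) assms(3)] by simp
  ultimately have "u - u' \<in> m n \<inter> lcs br (Suc n)" by blast
  then have "u - u' = 0" unfolding mint[OF assms(1)] by simp
  then show ?thesis by simp
qed

lemma pj_prop: assumes "n \<ge> 1" "w \<in> lcs br n"
  shows "pj n w \<in> m n \<and> w - pj n w \<in> lcs br (Suc n)"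
proof -
  have "w \<in> {u + v | u v. u \<in> m n \<and> v \<in> lcs br (Suc n)}"
    unfolding msum[OF assms(1)] by (rule assms(2))
  then obtain u v where uv: "w = u + v" "u \<in> m n" "v \<in> lcs br (Suc n)" by blast
  have ex: "u \<in> m n \<and> w - u \<in> lcs br (Suc n)" using uv by simp
  have "(THE u'. u' \<in> m n \<and> w - u' \<in> lcs br (Suc n)) = u"
    by (rule the_equality) (use ex pj_uniq[OF assms(1)] in auto)
  then show ?thesis unfolding pj_def using ex by simp
qed

lemma pj_eq: assumes "n \<ge> 1" "u \<in> m n" "w - u \<in> lcs br (Suc n)" shows "pj n w = u"
proof -
  have "w = u + (w - u)" by simp
  moreover have "u \<in> lcs br n" using m_lcs assms by blast
  moreover have "w - u \<in> lcs br n" using lcs_Suc_sub assms by blast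
  ultimately have "w \<in> lcs br n" using lcs_sub_add by metis
  then have "pj n w \<in> m n" "w - pj n w \<in> lcs br (Suc n)" using pj_prop[OF assms(1)] by auto
  then show ?thesis using pj_uniq[OF assms(1) _ _ assms(2,3)] by blast
qed

lemma pj_add: assumes "n \<ge> 1" "w1 \<in> lcs br n" "w2 \<in> lcs br n"
  shows "pj n (w1 + w2) = pj n w1 + pj n w2"
proof (rule pj_eq[OF assms(1)])
  show "pj n w1 + pj n w2 \<in> m n" using pj_prop assms msub subspace_add by blast
  have "w1 + w2 - (pj n w1 + pj n w2) = (w1 - pj n w1) + (w2 - pj n w2)" by simp
  then show "w1 + w2 - (pj n w1 + pj n w2) \<in> lcs br (Suc n)"
    using pj_prop assms lcs_sub_add by metis
qed

lemma pj_scale: assumes "n \<ge> 1" "w \<in> lcs br n"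
  shows "pj n (c *\<^sub>R w) = c *\<^sub>R pj n w"
proof (rule pj_eq[OF assms(1)])
  show "c *\<^sub>R pj n w \<in> m n" using pj_prop assms msub subspace_scale by blast
  have "c *\<^sub>R w - c *\<^sub>R pj n w = c *\<^sub>R (w - pj n w)" by (simp add: algebra_simps)
  then show "c *\<^sub>R w - c *\<^sub>R pj n w \<in> lcs br (Suc n)"
    using pj_prop assms lcs_sub_scale by metis
qed

lemma res_lin: "linear (res n) \<and> (\<forall>v. res n v \<in> lcs br (Suc n))"
proof (induction n)
  case 0
  then show ?case by (simp add: linear_id[unfolded id_def])
next
  case (Suc n)
  then have L: "linear (res n)" and R: "\<And>v. res n v \<in> lcs br (Suc n)" by auto
  have "linear (res (Suc n))"
  proof (rule linearI)
    fix x y show "res (Suc n) (x + y) = res (Suc n) x + res (Suc n) y"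
      using pj_add[of "Suc n", OF _ R R] linear_add[OF L] by simp
  next
    fix c x show "res (Suc n) (c *\<^sub>R x) = c *\<^sub>R res (Suc n) x"
      using pj_scale[of "Suc n", OF _ R] linear_scale[OF L] by (simp add: algebra_simps)
  qed
  moreover have "res (Suc n) v \<in> lcs br (Suc (Suc n))" for v
    using pj_prop[of "Suc n", OF _ R] by simp
  ultimately show ?case by blast
qed

lemma pr_lin: "linear (pr k)"
proof (cases "k = 0")
  case True
  then have "pr k = (\<lambda>v. 0)" by (auto simp: pr_def)
  then show ?thesis by (simp add: linear_zero)
next
  case False
  have L: "linear (res (k-1))" and R: "\<And>v. res (k-1) v \<in> lcs br k" using res_lin[of "k-1"] False by auto
  show ?thesis
  proof (rule linearI)
    fix x y show "pr k (x + y) = pr k x + pr k y"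
      using pj_add[of k, OF _ R R] linear_add[OF L] False by (simp add: pr_def)
  next
    fix c x show "pr k (c *\<^sub>R x) = c *\<^sub>R pr k x"
      using pj_scale[of k, OF _ R] linear_scale[OF L] False by (simp add: pr_def)
  qed
qed

lemma pr_m: "k \<ge> 1 \<Longrightarrow> pr k v \<in> m k"
  using pj_prop[of k "res (k-1) v"] res_lin[of "k-1"] by (simp add: pr_def)

lemma pr_lcs: "pr k v \<in> lcs br k"
proof (cases "k = 0")
  case True then show ?thesis by (simp add: pr_def lcs_0)
next
  case False then show ?thesis using pr_m[of k v] m_lcs[of k] by auto
qed

lemma res_fix: "v \<in> lcs br (Suc k) \<Longrightarrow> n \<le> k \<Longrightarrow> res n v = v"
proof (induction n)
  case 0 then show ?case by simp
next
  case (Suc n)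
  have "v \<in> lcs br (Suc (Suc n))" using Suc.prems lcs_antimono[of "Suc (Suc n)" "Suc k"] by auto
  then have "pj (Suc n) v = 0" by (intro pj_eq) (auto simp: msub subspace_0)
  then show ?case using Suc by simp
qed

lemma pr_zero: "v \<in> lcs br (Suc k) \<Longrightarrow> pr k v = 0"
proof (cases "k = 0")
  case True then show ?thesis by (simp add: pr_def)
next
  case False
  assume v: "v \<in> lcs br (Suc k)"
  then have "res (k-1) v = v" using res_fix by simp
  moreover have "pj k v = 0" using v False by (intro pj_eq) (auto simp: msub subspace_0)
  ultimately show ?thesis using False by (simp add: pr_def)
qed

lemma decomp_n: "v = (\<Sum>k\<in>{1..n}. pr k v) + res n v"
proof (induction n)
  case 0 then show ?case by simp
next
  case (Suc n)
  have "res (Suc n) v = res n v - pr (Suc n) v" by (simp add: pr_def)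
  then show ?case using Suc by (simp add: sum.atLeast1_atMost_eq algebra_simps)
qed

lemma decomp: "v = (\<Sum>k\<in>{1..K}. pr k v)"
  using decomp_n[of v K] res_lin[of K] nil by auto

lemma pr_cont: "continuous_on S g \<Longrightarrow> continuous_on S (\<lambda>x. pr k (g x))"
  using pr_lin[of k] linear_conv_bounded_linear bounded_linear.continuous_on by blast

lemma pr_sum: "pr k (sum f A) = (\<Sum>i\<in>A. pr k (f i))"
  using linear_sum[OF pr_lin] .
lemma pr_scale: "pr k (c *\<^sub>R x) = c *\<^sub>R pr k x"
  using linear_scale[OF pr_lin] .
lemma pr_add: "pr k (x + y) = pr k x + pr k y"
  using linear_add[OF pr_lin] .

definition good :: "(real \<Rightarrow> 'p::metric_space \<Rightarrow> 'a) \<Rightarrow> bool" where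
  "good V \<longleftrightarrow> (\<forall>k. \<exists>H. continuous_on ({0..1} \<times> UNIV) H \<and>
      (\<forall>s p. 0 < s \<and> s \<le> 1 \<longrightarrow> s ^ k *\<^sub>R pr k (V s p) = H (s, p)))"

lemma good_intro:
  fixes X :: "'i \<Rightarrow> real \<times> 'p::metric_space \<Rightarrow> 'a" and V :: "real \<Rightarrow> 'p \<Rightarrow> 'a"
  assumes fin: "finite I" and cont: "\<And>i. i \<in> I \<Longrightarrow> continuous_on ({0..1} \<times> UNIV) (X i)"
    and inl: "\<And>i s p. i \<in> I \<Longrightarrow> 0 < s \<Longrightarrow> s \<le> 1 \<Longrightarrow> X i (s, p) \<in> lcs br (d i)"
    and V: "\<And>s p. 0 < s \<Longrightarrow> s \<le> 1 \<Longrightarrow> V s p = (\<Sum>i\<in>I. (1 / s) ^ d i *\<^sub>R X i (s, p))"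
  shows "good V"
  unfolding good_def
proof
  fix k
  let ?H = "\<lambda>z. \<Sum>i\<in>{i\<in>I. d i \<le> k}. fst z ^ (k - d i) *\<^sub>R pr k (X i z)"
  have "continuous_on ({0..1} \<times> UNIV) ?H"
    by (intro continuous_intros pr_cont) (use cont in auto)
  moreover have "s ^ k *\<^sub>R pr k (V s p) = ?H (s, p)" if s: "0 < s" "s \<le> 1" for s p
  proof -
    have "s ^ k *\<^sub>R pr k (V s p) = (\<Sum>i\<in>I. s ^ k *\<^sub>R ((1 / s) ^ d i *\<^sub>R pr k (X i (s, p))))"
      using V[OF s] by (simp add: pr_sum pr_scale scaleR_sum_right)
    also have "\<dots> = (\<Sum>i\<in>I. if d i \<le> k then s ^ (k - d i) *\<^sub>R pr k (X i (s, p)) else 0)"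
    proof (rule sum.cong[OF refl])
      fix i assume i: "i \<in> I"
      show "s ^ k *\<^sub>R ((1 / s) ^ d i *\<^sub>R pr k (X i (s, p))) =
            (if d i \<le> k then s ^ (k - d i) *\<^sub>R pr k (X i (s, p)) else 0)"
      proof (cases "d i \<le> k")
        case True
        have "s ^ k * (1 / s) ^ d i = s ^ (k - d i)"
          using s True by (simp add: power_diff power_one_over field_simps)
        then show ?thesis using True by simp
      next
        case False
        have "X i (s, p) \<in> lcs br (Suc k)"
          using inl[OF i s] lcs_antimono[of "Suc k" "d i"] False by auto
        then show ?thesis using False pr_zero by simp
      qed
    qed
    also have "\<dots> = ?H (s, p)" by (simp add: sum.inter_filter[OF fin])
    finally show ?thesis .
  qed
  ultimately show "\<exists>H. continuous_on ({0..1} \<times> UNIV) H \<and>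
      (\<forall>s p. 0 < s \<and> s \<le> 1 \<longrightarrow> s ^ k *\<^sub>R pr k (V s p) = H (s, p))" by blast
qed

lemma good_zero: "good (\<lambda>s p. 0)"
  unfolding good_def using linear_0[OF pr_lin]
  by (auto intro!: exI[of _ "\<lambda>z. 0"])

lemma good_add: assumes "good U" "good V" shows "good (\<lambda>s p. U s p + V s p)"
  unfolding good_def
proof
  fix k
  obtain H where H: "continuous_on ({0..1} \<times> UNIV) H" "\<forall>s p. 0 < s \<and> s \<le> 1 \<longrightarrow> s ^ k *\<^sub>R pr k (U s p) = H (s, p)"
    using assms(1) unfolding good_def by blast
  obtain G where G: "continuous_on ({0..1} \<times> UNIV) G" "\<forall>s p. 0 < s \<and> s \<le> 1 \<longrightarrow> s ^ k *\<^sub>R pr k (V s p) = G (s, p)"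
    using assms(2) unfolding good_def by blast
  show "\<exists>H. continuous_on ({0..1} \<times> UNIV) H \<and>
      (\<forall>s p. 0 < s \<and> s \<le> 1 \<longrightarrow> s ^ k *\<^sub>R pr k (U s p + V s p) = H (s, p))"
    by (rule exI[of _ "\<lambda>z. H z + G z"]) (use H G in \<open>auto intro!: continuous_intros simp: pr_add scaleR_add_right\<close>)
qed

lemma good_scale: assumes "good U" shows "good (\<lambda>s p. c *\<^sub>R U s p)"
  unfolding good_def
proof
  fix k
  obtain H where H: "continuous_on ({0..1} \<times> UNIV) H" "\<forall>s p. 0 < s \<and> s \<le> 1 \<longrightarrow> s ^ k *\<^sub>R pr k (U s p) = H (s, p)"
    using assms(1) unfolding good_def by blast
  show "\<exists>H. continuous_on ({0..1} \<times> UNIV) H \<and>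
      (\<forall>s p. 0 < s \<and> s \<le> 1 \<longrightarrow> s ^ k *\<^sub>R pr k (c *\<^sub>R U s p) = H (s, p))"
  proof (rule exI[of _ "\<lambda>z. c *\<^sub>R H z"], intro conjI allI impI)
    show "continuous_on ({0..1} \<times> UNIV) (\<lambda>z. c *\<^sub>R H z)" using H by (auto intro!: continuous_intros)
    fix s :: real and p assume "0 < s \<and> s \<le> 1"
    then have "s ^ k *\<^sub>R pr k (U s p) = H (s, p)" using H by blast
    then show "s ^ k *\<^sub>R pr k (c *\<^sub>R U s p) = c *\<^sub>R H (s, p)"
      by (metis pr_scale scaleR_scaleR mult.commute)
  qed
qed

lemma good_sum: assumes "\<And>i. i \<in> A \<Longrightarrow> good (F i)" shows "good (\<lambda>s p. \<Sum>i\<in>A. F i s p)"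
proof (cases "finite A")
  case True
  then show ?thesis using assms
  proof (induction A rule: finite_induct)
    case empty then show ?case using good_zero by simp
  next
    case (insert x A)
    then show ?case using good_add[of "F x" "\<lambda>s p. \<Sum>i\<in>A. F i s p"] by simp
  qed
next
  case False then show ?thesis using good_zero by simp
qed

lemma good_choice:
  assumes "good U"
  obtains H where "\<And>k. continuous_on ({0..1} \<times> UNIV) (H k)"
    "\<And>k s p. 0 < s \<Longrightarrow> s \<le> 1 \<Longrightarrow> s ^ k *\<^sub>R pr k (U s p) = H k (s, p)"
proof -
  from assms have "\<forall>k. \<exists>H. continuous_on ({0..1} \<times> UNIV) H \<and>
      (\<forall>s p. 0 < s \<and> s \<le> 1 \<longrightarrow> s ^ k *\<^sub>R pr k (U s p) = H (s, p))" unfolding good_def by blast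
  then obtain H where "\<forall>k. continuous_on ({0..1} \<times> UNIV) (H k) \<and>
      (\<forall>s p. 0 < s \<and> s \<le> 1 \<longrightarrow> s ^ k *\<^sub>R pr k (U s p) = H k (s, p))" by metis
  then show ?thesis using that by blast
qed

lemma good_expand:
  assumes "\<And>k s p. 0 < s \<Longrightarrow> s \<le> 1 \<Longrightarrow> s ^ k *\<^sub>R pr k (U s p) = H k (s, p)" "0 < s" "s \<le> 1"
  shows "U s p = (\<Sum>q\<in>{1..K}. (1 / s) ^ q *\<^sub>R H q (s, p))"
proof -
  have "U s p = (\<Sum>q\<in>{1..K}. pr q (U s p))" by (rule decomp)
  also have "\<dots> = (\<Sum>q\<in>{1..K}. (1 / s) ^ q *\<^sub>R H q (s, p))"
  proof (rule sum.cong[OF refl])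
    fix q
    have h: "H q (s, p) = s ^ q *\<^sub>R pr q (U s p)"
      using assms(1)[OF assms(2,3), of q p] by simp
    have "(1 / s) ^ q *\<^sub>R H q (s, p) = ((1 / s) ^ q * s ^ q) *\<^sub>R pr q (U s p)"
      unfolding h by (simp only: scaleR_scaleR)
    also have "\<dots> = pr q (U s p)" using assms(2) by (simp add: power_one_over)
    finally show "pr q (U s p) = (1 / s) ^ q *\<^sub>R H q (s, p)" by simp
  qed
  finally show ?thesis .
qed

lemma good_br:
  fixes U V :: "real \<Rightarrow> 'p::metric_space \<Rightarrow> 'a"
  assumes "good U" "good V" shows "good (\<lambda>s p. br (U s p) (V s p))"
proof -
  obtain H where Hc: "\<And>k. continuous_on ({0..1} \<times> UNIV) (H k)"
    and He: "\<And>k s p. 0 < s \<Longrightarrow> s \<le> 1 \<Longrightarrow> s ^ k *\<^sub>R pr k (U s p) = H k (s, p)"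
    using good_choice[OF assms(1)] by blast
  obtain G where Gc: "\<And>k. continuous_on ({0..1} \<times> UNIV) (G k)"
    and Ge: "\<And>k s p. 0 < s \<Longrightarrow> s \<le> 1 \<Longrightarrow> s ^ k *\<^sub>R pr k (V s p) = G k (s, p)"
    using good_choice[OF assms(2)] by blast
  show ?thesis
  proof (rule good_intro[where I = "{1..K} \<times> {1..K}" and d = "\<lambda>i. fst i + snd i"
      and X = "\<lambda>i z. br (H (fst i) z) (G (snd i) z)"])
    show "finite ({1..K} \<times> {1..K})" by simp
    show "continuous_on ({0..1} \<times> UNIV) (\<lambda>z. br (H (fst i) z) (G (snd i) z))" for i
      by (rule bilinear_continuous_on_compose[OF Hc Gc bil])
    show "br (H (fst i) (s, p)) (G (snd i) (s, p)) \<in> lcs br (fst i + snd i)"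
      if "i \<in> {1..K} \<times> {1..K}" "0 < s" "s \<le> 1" for i s p
    proof -
      have "H (fst i) (s, p) \<in> lcs br (fst i)"
        using He[OF that(2,3), of "fst i" p, symmetric] pr_lcs lcs_sub_scale by metis
      moreover have "G (snd i) (s, p) \<in> lcs br (snd i)"
        using Ge[OF that(2,3), of "snd i" p, symmetric] pr_lcs lcs_sub_scale by metis
      ultimately show ?thesis using filt' that(1) by auto
    qed
    show "br (U s p) (V s p) = (\<Sum>i\<in>{1..K} \<times> {1..K}. (1 / s) ^ (fst i + snd i) *\<^sub>R br (H (fst i) (s, p)) (G (snd i) (s, p)))"
      if "0 < s" "s \<le> 1" for s p
    proof -
      have "br (U s p) (V s p) = br (\<Sum>q\<in>{1..K}. (1 / s) ^ q *\<^sub>R H q (s, p)) (\<Sum>q\<in>{1..K}. (1 / s) ^ q *\<^sub>R G q (s, p))"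
        using good_expand[OF He that] good_expand[OF Ge that] by metis
      also have "\<dots> = (\<Sum>(i, j)\<in>{1..K} \<times> {1..K}. br ((1 / s) ^ i *\<^sub>R H i (s, p)) ((1 / s) ^ j *\<^sub>R G j (s, p)))"
        by (rule bilinear_sum[OF bil])
      also have "\<dots> = (\<Sum>i\<in>{1..K} \<times> {1..K}. (1 / s) ^ (fst i + snd i) *\<^sub>R br (H (fst i) (s, p)) (G (snd i) (s, p)))"
        by (rule sum.cong[OF refl]) (auto simp: bilinear_lmul[OF bil] bilinear_rmul[OF bil] power_add mult.commute)
      finally show ?thesis .
    qed
  qed
qed

lemma good_lin:
  fixes V :: "real \<Rightarrow> 'p::metric_space \<Rightarrow> 'a"
  assumes "continuous_on UNIV f"
    "\<And>s p. 0 < s \<Longrightarrow> s \<le> 1 \<Longrightarrow> V s p = (\<Sum>j\<in>{1..K}. (1 / s) ^ j *\<^sub>R pr j (f p))"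
  shows "good V"
proof (rule good_intro[where I = "{1..K}" and d = "\<lambda>j. j" and X = "\<lambda>j z. pr j (f (snd z))"])
  show "continuous_on ({0..1} \<times> UNIV) (\<lambda>z. pr j (f (snd z)))" for j
    by (intro pr_cont continuous_on_compose2[OF assms(1)] continuous_intros) auto
qed (use assms pr_lcs in auto)

lemma good_rbr:
  fixes Ls :: "(real \<Rightarrow> 'p::metric_space \<Rightarrow> 'a) list"
  shows "(\<And>L. L \<in> set Ls \<Longrightarrow> good L) \<Longrightarrow> good (\<lambda>s p. rbr br (map (\<lambda>L. L s p) Ls))"
proof (induction Ls)
  case Nil then show ?case using good_zero by simp
next
  case (Cons L Ls)
  show ?case
  proof (cases Ls)
    case Nil then show ?thesis using Cons.prems by simp
  next
    case (Cons L' Ls')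
    have "good (\<lambda>s p. br (L s p) (rbr br (map (\<lambda>L. L s p) Ls)))"
      using good_br[of L "\<lambda>s p. rbr br (map (\<lambda>L. L s p) Ls)"] Cons.IH Cons.prems by simp
    then show ?thesis using Cons by simp
  qed
qed

lemma good_final:
  assumes "good V"
  obtains Psi where "continuous_on ({0..1} \<times> UNIV) Psi"
    "\<And>s p. 0 < s \<Longrightarrow> s \<le> 1 \<Longrightarrow> Psi (s, p) = (\<Sum>k\<in>{1..K}. s ^ k *\<^sub>R pr k (V s p))"
proof -
  obtain H where Hc: "\<And>k. continuous_on ({0..1} \<times> UNIV) (H k)"
    and He: "\<And>k s p. 0 < s \<Longrightarrow> s \<le> 1 \<Longrightarrow> s ^ k *\<^sub>R pr k (V s p) = H k (s, p)"
    using good_choice[OF assms(1)] by blast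
  show ?thesis
    by (rule that[of "\<lambda>z. \<Sum>k\<in>{1..K}. H k z"]) (use Hc He in \<open>auto intro!: continuous_intros\<close>)
qed

end



lemma word_map: "concat (map (\<lambda>(r, s). replicate r (f a) @ replicate s (f b)) rs)
   = map f (concat (map (\<lambda>(r, s). replicate r a @ replicate s b) rs))"
  by (induction rs) (auto simp: map_replicate)

lemma word_set: "set (concat (map (\<lambda>(r, s). replicate r a @ replicate s b) rs)) \<subseteq> {a, b}"
  by (induction rs) auto

lemma rbr_zy:
  assumes "bilinear br" "\<And>x. br x x = 0"
  shows "set ws \<subseteq> {0, y} \<Longrightarrow> rbr br ws = (if ws = [y] then y else 0)"
proof (induction ws)
  case Nil then show ?case by simp
next
  case (Cons z ws)
  show ?case
  proof (cases ws)
    case Nil then show ?thesis using Cons.prems by auto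
  next
    case (Cons v va)
    have z: "z = 0 \<or> z = y" using Cons.prems by auto
    have IH: "rbr br ws = (if ws = [y] then y else 0)" using Cons.IH Cons.prems by auto
    have "rbr br (z # ws) = br z (rbr br ws)" using Cons by simp
    also have "\<dots> = 0"
      using z IH assms bilinear_lzero[OF assms(1)] bilinear_rzero[OF assms(1)] by auto
    finally show ?thesis using Cons by simp
  qed
qed

lemma rep1: "replicate n x = [y] \<longleftrightarrow> n = 1 \<and> x = y"
  by (cases n) auto

lemma word_one:
  assumes "y \<noteq> 0" "\<forall>(r, s) \<in> set rs. 0 < r + s"
    "concat (map (\<lambda>(r, s). replicate r 0 @ replicate s y) rs) = [y]"
  shows "rs = [(0, 1)]"
proof (cases rs)
  case Nil then show ?thesis using assms by simp
next
  case (Cons a rs')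
  obtain r s where a: "a = (r, s)" by force
  have e: "replicate r 0 @ replicate s y @ concat (map (\<lambda>(r, s). replicate r 0 @ replicate s y) rs') = [y]"
    using assms(3) Cons a by simp
  have pos: "0 < r + s" using assms(2) Cons a by auto
  have r0: "r = 0"
  proof (rule ccontr)
    assume "r \<noteq> 0"
    then obtain r' where "r = Suc r'" by (cases r) auto
    then show False using e assms(1) by simp
  qed
  then have e2: "replicate s y @ concat (map (\<lambda>(r, s). replicate r 0 @ replicate s y) rs') = [y]" using e by simp
  then have "length (replicate s y @ concat (map (\<lambda>(r, s). replicate r 0 @ replicate s y) rs')) = 1" by simp
  then have l: "s + length (concat (map (\<lambda>(r, s). replicate r 0 @ replicate s y) rs')) = 1" by simp
  then have s1: "s = 1" using pos r0 by linarith
  then have "length (concat (map (\<lambda>(r, s). replicate r 0 @ replicate s y) rs')) = 0" using l by simp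
  then have "concat (map (\<lambda>(r, s). replicate r 0 @ replicate s y) rs') = []" by simp
  then have "rs' = []"
  proof (cases rs')
    case (Cons b rs'')
    obtain r2 s2 where b: "b = (r2, s2)" by force
    assume "concat (map (\<lambda>(r, s). replicate r 0 @ replicate s y) rs') = []"
    moreover have "0 < r2 + s2" using assms(2) Cons b \<open>rs = a # rs'\<close> by auto
    ultimately show ?thesis using Cons b by auto
  qed simp
  then show ?thesis using Cons a r0 s1 by simp
qed

lemma dw_finite: "finite (dynkin_words K n)"
proof -
  have "dynkin_words K n \<subseteq> {xs. set xs \<subseteq> {0..K} \<times> {0..K} \<and> length xs = n}"
    unfolding dynkin_words_def by auto
  then show ?thesis using finite_lists_length_eq[of "{0..K} \<times> {0..K}" n] finite_subset by blast
qed

lemma dw_one: "1 \<le> K \<Longrightarrow> [(0, 1)] \<in> dynkin_words K n \<longleftrightarrow> n = 1"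
  unfolding dynkin_words_def by auto

lemma gmul_0:
  fixes br :: "'a::euclidean_space \<Rightarrow> 'a \<Rightarrow> 'a"
  assumes bil: "bilinear br" and alt: "\<And>x. br x x = 0"
  shows "gmul br 0 y = y"
proof -
  define c where "c = (\<lambda>(n::nat) rs. ((-1) ^ (n - 1) / real n
         / (real (sum_list (map (\<lambda>(r, s). r + s) rs))
            * (\<Prod>(r, s)\<leftarrow>rs. fact r * fact s))) :: real)"
  define w where "w = (\<lambda>rs. concat (map (\<lambda>(r, s). replicate r (0::'a) @ replicate s y) rs))"
  have g: "gmul br 0 y = (\<Sum>n\<in>{1..DIM('a)}. \<Sum>rs\<in>dynkin_words DIM('a) n. c n rs *\<^sub>R rbr br (w rs))"
    unfolding gmul_def c_def w_def by simp
  have rw: "rbr br (w rs) = (if w rs = [y] then y else 0)" for rs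
    using rbr_zy[OF bil alt] word_set[of 0 y rs] unfolding w_def by blast
  show ?thesis
  proof (cases "y = 0")
    case True
    have "(if w rs = [y] then y else 0) = 0" for rs using True by simp
    then show ?thesis unfolding g rw using True by simp
  next
    case False
    have wi: "w rs = [y] \<longleftrightarrow> rs = [(0, 1)]" if "rs \<in> dynkin_words DIM('a) n" for rs n
    proof
      assume "w rs = [y]"
      moreover have "\<forall>(r, s) \<in> set rs. 0 < r + s" using that unfolding dynkin_words_def by blast
      ultimately show "rs = [(0, 1)]" using word_one[OF False] unfolding w_def by blast
    qed (simp add: w_def)
    have "gmul br 0 y = (\<Sum>n\<in>{1..DIM('a)}. \<Sum>rs\<in>dynkin_words DIM('a) n.
              if rs = [(0, 1)] then c n rs *\<^sub>R y else 0)"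
      unfolding g rw by (intro sum.cong refl) (auto simp: wi)
    also have "\<dots> = (\<Sum>n\<in>{1..DIM('a)}. if n = 1 then c n [(0, 1)] *\<^sub>R y else 0)"
    proof (intro sum.cong refl)
      fix n
      have "(\<Sum>rs\<in>dynkin_words DIM('a) n. if rs = [(0, 1)] then c n rs *\<^sub>R y else 0)
         = (if [(0, 1)] \<in> dynkin_words DIM('a) n then c n [(0, 1)] *\<^sub>R y else 0)"
        by (rule sum.delta[OF dw_finite])
      also have "\<dots> = (if n = 1 then c n [(0, 1)] *\<^sub>R y else 0)"
        using dw_one[of "DIM('a)" n] DIM_positive[where 'a='a] by (simp only: Suc_leI One_nat_def)
      finally show "(\<Sum>rs\<in>dynkin_words DIM('a) n. if rs = [(0, 1)] then c n rs *\<^sub>R y else 0)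
         = (if n = 1 then c n [(0, 1)] *\<^sub>R y else 0)" .
    qed
    also have "\<dots> = c 1 [(0, 1)] *\<^sub>R y"
      by (subst sum.delta) (use DIM_positive[where 'a='a] in auto)
    also have "\<dots> = y" by (simp add: c_def)
    finally show ?thesis .
  qed
qed


context LS begin

lemma good_gmul:
  fixes X Y :: "real \<Rightarrow> 'p::metric_space \<Rightarrow> 'a"
  assumes X: "good X" and Y: "good Y" shows "good (\<lambda>s p. gmul br (X s p) (Y s p))"
  unfolding gmul_def
proof (intro good_sum good_scale)
  fix n rs
  have e: "(\<lambda>s p. rbr br (concat (map (\<lambda>(r, sa). replicate r (X s p) @ replicate sa (Y s p)) rs)))
      = (\<lambda>s p. rbr br (map (\<lambda>L. L s p) (concat (map (\<lambda>(r, sa). replicate r X @ replicate sa Y) rs))))"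
  proof (intro ext)
    fix s p
    show "rbr br (concat (map (\<lambda>(r, sa). replicate r (X s p) @ replicate sa (Y s p)) rs))
      = rbr br (map (\<lambda>L. L s p) (concat (map (\<lambda>(r, sa). replicate r X @ replicate sa Y) rs)))"
      using word_map[of "\<lambda>L. L s p" X Y rs] by simp
  qed
  show "good (\<lambda>s p. rbr br (concat (map (\<lambda>(r, sa). replicate r (X s p) @ replicate sa (Y s p)) rs)))"
    unfolding e by (rule good_rbr) (use word_set[of X Y rs] X Y in auto)
qed

end




context LS begin

lemma dform:
  assumes lin: "linear D" and hm: "\<And>p v. p \<ge> 1 \<Longrightarrow> v \<in> m p \<Longrightarrow> D v = t ^ p *\<^sub>R v"
  shows "D v = (\<Sum>j\<in>{1..K}. t ^ j *\<^sub>R pr j v)"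
proof -
  have "D v = D (\<Sum>j\<in>{1..K}. pr j v)" using decomp by metis
  also have "\<dots> = (\<Sum>j\<in>{1..K}. D (pr j v))" by (rule linear_sum[OF lin])
  also have "\<dots> = (\<Sum>j\<in>{1..K}. t ^ j *\<^sub>R pr j v)"
    by (rule sum.cong[OF refl]) (use hm pr_m in auto)
  finally show ?thesis .
qed

lemma dinv:
  assumes lin: "linear D" and hm: "\<And>p v. p \<ge> 1 \<Longrightarrow> v \<in> m p \<Longrightarrow> D v = t ^ p *\<^sub>R v"
    and lin': "linear D'" and hm': "\<And>p v. p \<ge> 1 \<Longrightarrow> v \<in> m p \<Longrightarrow> D' v = (1 / t) ^ p *\<^sub>R v"
    and t: "t > 0"
  shows "D (D' v) = v"
proof -
  have "D (D' v) = D (\<Sum>j\<in>{1..K}. (1 / t) ^ j *\<^sub>R pr j v)" using dform[OF lin' hm'] by metis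
  also have "\<dots> = (\<Sum>j\<in>{1..K}. (1 / t) ^ j *\<^sub>R D (pr j v))"
    by (simp add: linear_sum[OF lin] linear_scale[OF lin])
  also have "\<dots> = (\<Sum>j\<in>{1..K}. pr j v)"
    by (rule sum.cong[OF refl]) (use hm pr_m t in \<open>auto simp: power_one_over\<close>)
  also have "\<dots> = v" using decomp by metis
  finally show ?thesis .
qed


lemma qbounded:
  fixes dl :: "real \<Rightarrow> 'a \<Rightarrow> 'a" and q :: "'a \<Rightarrow> real"
  assumes dlin: "\<And>t. t > 0 \<Longrightarrow> linear (dl t)"
    and dhm: "\<And>t p v. t > 0 \<Longrightarrow> p \<ge> 1 \<Longrightarrow> v \<in> m p \<Longrightarrow> dl t v = t ^ p *\<^sub>R v"
    and qc: "continuous_on UNIV q" and qz: "\<And>x. q x = 0 \<longleftrightarrow> x = 0"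
    and q0: "\<And>x. 0 \<le> q x"
    and qh: "\<And>t x. t > 0 \<Longrightarrow> q (dl t x) = t * q x"
  shows "bounded {x. q x \<le> 1}"
proof -
  obtain u0 :: 'a where "norm u0 = 1" using vector_choose_size[of 1] by auto
  then have ne: "sphere (0::'a) 1 \<noteq> {}" by auto
  obtain w where w: "w \<in> sphere (0::'a) 1" and wmin: "\<And>y. y \<in> sphere 0 1 \<Longrightarrow> q w \<le> q y"
    using continuous_attains_inf[OF compact_sphere ne continuous_on_subset[OF qc]] by blast
  define c where "c = q w"
  have cpos: "c > 0" using w qz q0[of w] unfolding c_def by (metis less_eq_real_def norm_zero mem_sphere_0 zero_neq_one)
  have "\<forall>j. \<exists>B>0. \<forall>x. norm (pr j x) \<le> norm x * B"
    using pr_lin linear_conv_bounded_linear bounded_linear.pos_bounded by blast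
  then obtain B where B: "\<And>j. B j > 0" "\<And>j x. norm (pr j x) \<le> norm x * B j" by metis
  define M where "M = (\<Sum>j\<in>{1..K}. (1 / c) ^ j * B j)"
  have "norm x \<le> max 1 M" if qx: "q x \<le> 1" for x
  proof (rule ccontr)
    assume "\<not> ?thesis"
    then have nx: "norm x > 1" "norm x > M" by auto
    define h where "h = (\<lambda>s::real. norm (\<Sum>j\<in>{1..K}. s ^ j *\<^sub>R pr j x))"
    have hc: "continuous_on {0..1} h" unfolding h_def by (intro continuous_intros)
    have h0: "h 0 = 0" unfolding h_def by (simp add: power_0_left)
    have h1: "h 1 = norm x" unfolding h_def using decomp[of x] by simp
    obtain s where s: "0 \<le> s" "s \<le> 1" "h s = 1"
      using IVT'[of h 0 1 1, OF _ _ _ hc] h0 h1 nx by auto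
    then have spos: "s > 0" using h0 by (cases "s = 0") auto
    define u where "u = dl s x"
    have u: "u = (\<Sum>j\<in>{1..K}. s ^ j *\<^sub>R pr j x)" unfolding u_def
      by (rule dform[OF dlin[OF spos] dhm[OF spos]])
    have nu: "norm u = 1" using s(3) u unfolding h_def by simp
    have "c \<le> q u" unfolding c_def using wmin nu by auto
    also have "q u = s * q x" unfolding u_def by (rule qh[OF spos])
    also have "\<dots> \<le> s" using qx spos by (simp add: mult_left_le)
    finally have cs: "c \<le> s" .
    have "dl (1 / s) (dl (1 / (1 / s)) x) = x"
      by (rule dinv[OF dlin dhm dlin dhm]) (use spos in auto)
    then have xu: "x = dl (1 / s) u" unfolding u_def by simp
    also have "\<dots> = (\<Sum>j\<in>{1..K}. (1 / s) ^ j *\<^sub>R pr j u)"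
      by (rule dform[OF dlin dhm]) (use spos in auto)
    finally have "norm x \<le> (\<Sum>j\<in>{1..K}. norm ((1 / s) ^ j *\<^sub>R pr j u))"
      by (metis norm_sum)
    also have "\<dots> \<le> (\<Sum>j\<in>{1..K}. (1 / c) ^ j * B j)"
    proof (rule sum_mono)
      fix j
      have "norm ((1 / s) ^ j *\<^sub>R pr j u) = (1 / s) ^ j * norm (pr j u)" using spos by simp
      also have "\<dots> \<le> (1 / s) ^ j * B j" using B(2)[of j u] nu spos by (simp add: mult_left_mono)
      also have "\<dots> \<le> (1 / c) ^ j * B j"
        using B(1)[of j] cs cpos spos
        by (intro mult_right_mono power_mono) (auto simp: divide_simps)
      finally show "norm ((1 / s) ^ j *\<^sub>R pr j u) \<le> (1 / c) ^ j * B j" .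
    qed
    finally show False using nx M_def by simp
  qed
  then show ?thesis unfolding bounded_iff by blast
qed


lemma main:
  fixes dl :: "real \<Rightarrow> 'a \<Rightarrow> 'a" and q :: "'a \<Rightarrow> real"
  assumes dlin: "\<And>t. t > 0 \<Longrightarrow> linear (dl t)"
    and dhm: "\<And>t p v. t > 0 \<Longrightarrow> p \<ge> 1 \<Longrightarrow> v \<in> m p \<Longrightarrow> dl t v = t ^ p *\<^sub>R v"
    and qc: "continuous_on UNIV q" and qz: "\<And>x. q x = 0 \<longleftrightarrow> x = 0"
    and q0: "\<And>x. 0 \<le> q x"
    and qh: "\<And>t x. t > 0 \<Longrightarrow> q (dl t x) = t * q x"
    and eps: "\<epsilon> > 0"
  shows "\<exists>\<delta>>0. \<exists>C>0. \<forall>x y. q y > C \<and> q x \<le> \<delta> * q y \<longrightarrow>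
           \<bar>q (gmul br x y) - q y\<bar> \<le> \<epsilon> * q y"
proof -
  have dinv': "dl t (dl (1 / t) v) = v" if "t > 0" for t v
    by (rule dinv[OF dlin dhm dlin dhm]) (use that in auto)
  have dinv'': "dl (1 / t) (dl t v) = v" if "t > 0" for t v
    using dinv'[of "1 / t" v] that by simp
  have dfm: "dl t v = (\<Sum>j\<in>{1..K}. t ^ j *\<^sub>R pr j v)" if "t > 0" for t v
    by (rule dform[OF dlin[OF that] dhm[OF that]])
  define V where "V = (\<lambda>s (p :: 'a \<times> 'a). gmul br (dl (1 / s) (fst p)) (dl (1 / s) (snd p)))"
  have gV: "good V" unfolding V_def
  proof (rule good_gmul)
    show "good (\<lambda>s (p :: 'a \<times> 'a). dl (1 / s) (fst p))"
      by (rule good_lin[where f = fst]) (auto intro: continuous_intros simp: dfm)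
    show "good (\<lambda>s (p :: 'a \<times> 'a). dl (1 / s) (snd p))"
      by (rule good_lin[where f = snd]) (auto intro: continuous_intros simp: dfm)
  qed
  obtain Psi where Pc: "continuous_on ({0..1} \<times> UNIV) Psi"
    and Pe: "\<And>s p. 0 < s \<Longrightarrow> s \<le> 1 \<Longrightarrow> Psi (s, p) = (\<Sum>k\<in>{1..K}. s ^ k *\<^sub>R pr k (V s p))"
    using good_final[OF gV] by blast
  have Pd: "Psi (s, p) = dl s (V s p)" if "0 < s" "s \<le> 1" for s p
    using Pe[OF that] dform[OF dlin dhm, of s] that by metis
  have P0: "Psi (s, (0, b)) = b" if "0 < s" "s \<le> 1" for s b
  proof -
    have "dl (1 / s) 0 = 0" using dlin[of "1/s"] that linear_0 by auto
    then show ?thesis using Pd[OF that] gmul_0[OF bil alt] dinv'[OF that(1)] unfolding V_def by simp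
  qed
  define D where "D = {a. q a \<le> 1}"
  define S where "S = {b. q b = 1}"
  have bD: "bounded D" unfolding D_def by (rule qbounded[OF dlin dhm qc qz q0 qh])
  have cD: "closed D" unfolding D_def by (rule closed_Collect_le[OF qc continuous_on_const])
  have cS: "closed S" unfolding S_def by (rule closed_Collect_eq[OF qc continuous_on_const])
  have SD: "S \<subseteq> D" unfolding S_def D_def by auto
  have kD: "compact D" using bD cD compact_eq_bounded_closed by blast
  have kS: "compact S" using bounded_subset[OF bD SD] cS compact_eq_bounded_closed by blast
  define KS where "KS = {0..1::real} \<times> (D \<times> S)"
  have kK: "compact KS" unfolding KS_def by (intro compact_Times kD kS compact_Icc)
  have gc: "continuous_on KS (\<lambda>z. q (Psi z))"
    by (rule continuous_on_compose2[OF qc continuous_on_subset[OF Pc]]) (auto simp: KS_def)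
  have "uniformly_continuous_on KS (\<lambda>z. q (Psi z))"
    by (rule compact_uniformly_continuous[OF gc kK])
  then obtain \<eta> where eta: "\<eta> > 0"
    and etaP: "\<And>z z'. z \<in> KS \<Longrightarrow> z' \<in> KS \<Longrightarrow> dist z' z < \<eta> \<Longrightarrow> dist (q (Psi z')) (q (Psi z)) < \<epsilon>"
    unfolding uniformly_continuous_on_def using eps by metis
  obtain d0 where d0: "d0 > 0" "d0 \<le> 1" and d0P: "\<And>a. q a \<le> d0 \<Longrightarrow> norm a < \<eta>"
  proof (cases "D \<inter> {a. \<eta> \<le> norm a} = {}")
    case True
    show ?thesis by (rule that[of 1]) (use True in \<open>auto simp: D_def not_le\<close>)
  next
    case False
    have "compact (D \<inter> {a. \<eta> \<le> norm a})"
      by (intro compact_Int_closed kD closed_Collect_le continuous_intros)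
    then obtain a0 where a0: "a0 \<in> D \<inter> {a. \<eta> \<le> norm a}"
      and a0m: "\<And>y. y \<in> D \<inter> {a. \<eta> \<le> norm a} \<Longrightarrow> q a0 \<le> q y"
      using continuous_attains_inf[OF _ False continuous_on_subset[OF qc]] by blast
    have "a0 \<noteq> 0" using a0 eta by auto
    then have qa0: "q a0 > 0" using qz q0 by (metis less_eq_real_def)
    show ?thesis
    proof (rule that[of "min 1 (q a0 / 2)"])
      fix a assume a: "q a \<le> min 1 (q a0 / 2)"
      show "norm a < \<eta>"
      proof (rule ccontr)
        assume "\<not> norm a < \<eta>"
        then have "a \<in> D \<inter> {a. \<eta> \<le> norm a}" using a by (auto simp: D_def)
        then have "q a0 \<le> q a" by (rule a0m)
        then show False using a qa0 by auto
      qed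
    qed (use qa0 in auto)
  qed
  show ?thesis
  proof (rule exI[of _ d0], rule conjI[OF d0(1)], rule exI[of _ "1::real"], intro conjI allI impI)
    show "(0::real) < 1" by simp
  next
    fix x y assume xy: "1 < q y \<and> q x \<le> d0 * q y"
    define t where "t = q y"
    define s where "s = 1 / t"
    have t1: "t > 1" using xy unfolding t_def by simp
    have s: "0 < s" "s \<le> 1" using t1 unfolding s_def by auto
    have st: "s * t = 1" using t1 unfolding s_def by simp
    define a where "a = dl s x"
    define b where "b = dl s y"
    have "q b = s * t" unfolding b_def t_def by (rule qh[OF s(1)])
    then have qb: "q b = 1" using st by simp
    have qax: "q a = s * q x" unfolding a_def by (rule qh[OF s(1)])
    have "q x \<le> d0 * t" using xy unfolding t_def by simp
    then have "s * q x \<le> s * (d0 * t)" using s(1) by (simp add: mult_left_mono)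
    also have "\<dots> = d0 * (s * t)" by (simp add: algebra_simps)
    finally have qa: "q a \<le> d0" using qax st by simp
    have na: "norm a < \<eta>" using d0P[OF qa] .
    have z1: "(s, (a, b)) \<in> KS" using s qb qa d0 unfolding KS_def D_def S_def by auto
    have "q 0 = 0" using qz by simp
    then have z0: "(s, (0, b)) \<in> KS" using s qb unfolding KS_def D_def S_def by auto
    have "dist (s, (a, b)) (s, (0, b)) = norm a" by (simp add: dist_Pair_Pair dist_norm)
    then have "dist (q (Psi (s, (a, b)))) (q (Psi (s, (0, b)))) < \<epsilon>"
      using etaP[OF z0 z1] na by simp
    moreover have "q (Psi (s, (0, b))) = 1" using P0[OF s] qb by simp
    moreover have "Psi (s, (a, b)) = dl s (gmul br x y)"
    proof -
      have "V s (a, b) = gmul br x y" unfolding V_def a_def b_def using dinv''[OF s(1)] by simp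
      then show ?thesis using Pd[OF s] by simp
    qed
    moreover have "q (dl s (gmul br x y)) = s * q (gmul br x y)" by (rule qh[OF s(1)])
    ultimately have lt: "\<bar>s * q (gmul br x y) - 1\<bar> < \<epsilon>" by (simp add: dist_real_def)
    have "q (gmul br x y) - t = t * (s * q (gmul br x y) - 1)" using st by (simp add: algebra_simps)
    then have "\<bar>q (gmul br x y) - t\<bar> = t * \<bar>s * q (gmul br x y) - 1\<bar>" using t1 by (simp add: abs_mult)
    also have "\<dots> \<le> t * \<epsilon>" using lt t1 by (simp add: mult_left_mono less_imp_le)
    finally have "\<bar>q (gmul br x y) - t\<bar> \<le> t * \<epsilon>" .
    then show "\<bar>q (gmul br x y) - q y\<bar> \<le> \<epsilon> * q y" unfolding t_def by (simp add: mult.commute)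
  qed
qed

end



theorem lemma2p15:
  fixes br :: "'a::euclidean_space \<Rightarrow> 'a \<Rightarrow> 'a" and q :: "'a \<Rightarrow> real" and \<epsilon> :: real
  assumes "lie_algebra br" and "nilpotent_lie br" and "quasi_norm br q" and "\<epsilon> > 0"
  shows "\<exists>\<delta>>0. \<exists>C>0. \<forall>x y. q y > C \<and> q x \<le> \<delta> * q y \<longrightarrow>
           \<bar>q (gmul br x y) - q y\<bar> \<le> \<epsilon> * q y"
proof -
  have bil: "bilinear br" and alt: "\<And>x. br x x = 0"
    and jac: "\<And>x y z. br x (br y z) + br y (br z x) + br z (br x y) = 0"
    using assms(1) unfolding lie_algebra_def by auto
  obtain k where k: "lcs br k = {0}" using assms(2) unfolding nilpotent_lie_def by blast
  have nil: "lcs br (Suc k) = {0}"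
    using lcs_Suc_sub[of br k] k lcs_subspace[of br "Suc k"] subspace_0 by blast
  have qc: "continuous_on UNIV q" and q0: "\<And>x. 0 \<le> q x" and qz: "\<And>x. q x = 0 \<longleftrightarrow> x = 0"
    using assms(3) unfolding quasi_norm_def by auto
  obtain dl where df: "dilation_family br dl" and qh: "\<forall>t>0. \<forall>x. q (dl t x) = t * q x"
    using assms(3) unfolding quasi_norm_def by blast
  obtain m :: "nat \<Rightarrow> 'a set" where
    mp: "\<forall>p\<ge>1. subspace (m p) \<and> m p \<inter> lcs br (Suc p) = {0} \<and>
                {u + v | u v. u \<in> m p \<and> v \<in> lcs br (Suc p)} = lcs br p"
    and dp: "\<forall>t>0. linear (dl t) \<and> (\<forall>p\<ge>1. \<forall>v\<in>m p. dl t v = t ^ p *\<^sub>R v)"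
    using df unfolding dilation_family_def by blast
  interpret L: LS br m k
    by (unfold_locales) (use bil alt jac nil mp in auto)
  show ?thesis
    by (rule L.main[of dl q \<epsilon>]) (use dp qc qz q0 qh assms(4) in auto)
qed

end
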